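(* Let $S$ be an Enriques surface of the second Mendes Lopes–Pardini family and $\mathcal{R}=\{R_1,\dots,R_{12}\}$ as in the context. Then the elliptic fibrations in $\mathcal{E}(S,\mathcal{R})$ are: $1$ of type $(2\widetilde{A}_1^{\mathrm{HF}})$, $4$ of type $(\widetilde{A}_3^{\mathrm{F}})$, $8$ of type $(\widetilde{A}_3^{\mathrm{HF}})$, $2$ of type $(2\widetilde{D}_4^{\mathrm{F}})$. Moreover $\mathrm{cnd}(S,\mathcal{R})=5$, hence $\mathrm{nd}(S)\geq 5$, and the following classes form an isotropic sequence of classes of half-fibers of length $5$: $\tfrac12[R_1+R_2+R_3+R_6]$, $\tfrac12[R_1+R_4+R_5+R_6]$, $\tfrac12[R_7+R_8+R_9+R_{12}]$, $\tfrac12[R_7+R_{10}+R_{11}+R_{12}]$, $[R_1+R_{12}]$.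
   Context: Work over $\mathbb{C}$. Let $D_1,D_2$ be elliptic curves, $A=D_1\times D_2$, $a_i\in D_1$, $b_i\in D_2$ ($i=1,2,3$) the nonzero $2$-torsion points, and $\mathbb{Z}_2^3=\langle e_1,e_2,e_3\rangle$ acting by $e_1(x_1,x_2)=(x_1+a_1,x_2+b_1)$, $e_2(x_1,x_2)=(x_1+a_2,-x_2)$, $e_3(x_1,x_2)=(-x_1,x_2+b_3)$. The minimal resolution $S$ of $A/\mathbb{Z}_2^3$ (eight $A_1$ points) is an Enriques surface; the two projections induce elliptic fibrations each with two $\widetilde{D}_4$ fibers, whose components are twelve smooth rational curves $R_1,\dots,R_{12}$ with dual graph: $R_1\cdot R_{12}=2$, $R_6\cdot R_7=2$; each of $R_2,\dots,R_5$ meets each of $R_1,R_6$ with intersection $1$; each of $R_8,\dots,R_{11}$ meets each of $R_7,R_{12}$ with intersection $1$; no other intersections. The labeling is such that $\tfrac12(R_1+R_2+R_3+R_6)$, $\tfrac12(R_7+R_8+R_9+R_{12})$ and $\tfrac12(R_1+R_2+R_5+R_8+R_{10})+\tfrac14(R_2+R_3+R_4+R_5)$ lie in $\mathrm{Num}(S)$. Definitions: $\mathrm{Num}(S)$ = divisors mod numerical equivalence. Half-fibers: reduced curves $F$ with $2F$ a multiple fiber of an elliptic fibration. $\mathrm{nd}(S)$ = maximal length of a sequence of classes of half-fibers $f_1,\dots,f_m$ with $f_i\cdot f_j=1$ for $i\neq j$. For a finite set $\mathcal{R}$ of smooth rational curves: an $\mathcal{R}$-elliptic cycle is $C=\sum_{R\in\mathcal{R}}a_RR$,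 $a_R\ge0$, whose support has dual graph an extended Dynkin diagram $\widetilde{A}_n$ (for $n=1$: two curves with intersection $2$), $\widetilde{D}_n,\widetilde{E}_{6,7,8}$, with $a_R$ the multiplicities of the corresponding Kodaira fiber. Put $c(C)=\tfrac12[C]$ if $\tfrac12[C]\in\mathrm{Num}(S)$ (then $C$ is a fiber) and $c(C)=[C]$ otherwise (then $C$ is a half-fiber). $\mathsf{HF}(S,\mathcal{R})=\{c(C)\}$; $\mathrm{cnd}(S,\mathcal{R})$ = max $m$ with $f_1,\dots,f_m\in\mathsf{HF}(S,\mathcal{R})$, $f_i\cdot f_j=1-\delta_{ij}$; $\mathcal{E}(S,\mathcal{R})$ = set of elliptic fibrations $|2F|$ with $[F]\in\mathsf{HF}(S,\mathcal{R})$. The type of a fibration in $\mathcal{E}(S,\mathcal{R})$ is the formal sum, over the $\mathcal{R}$-elliptic cycles $C$ whose support is a fiber of it, of $X^{\mathrm{F}}$ (if $C$ is a fiber) or $X^{\mathrm{HF}}$ (if $C$ is a half-fiber), $X$ the extended Dynkin type of $C$. *)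

theory Defs
  imports Complex_Main "HOL-Library.Multiset"
begin

text \<open>Q-divisors supported on R_1,...,R_12: a coefficient function (only the
values at 1..12 matter).  Numerical classes of such Q-divisors are compared
via their intersection numbers with R_1,...,R_12 (these span Num(S) tensor Q,
the intersection matrix having rank 10 = rank Num(S)).\<close>

type_synonym qdiv = "nat \<Rightarrow> rat"

definition Rs :: "nat set" where "Rs = {1..12}"

definition Rint :: "nat \<Rightarrow> nat \<Rightarrow> int" where
  "Rint i j =
    (if i = j then -2
     else if {i,j} = {1,12} \<or> {i,j} = {6,7} then 2
     else if (i \<in> {2..5} \<and> j \<in> {1,6}) \<or> (j \<in> {2..5} \<and> i \<in> {1,6}) then 1
     else if (i \<in> {8..11} \<and> j \<in> {7,12}) \<or> (j \<in> {8..11} \<and> i \<in> {7,12}) then 1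
     else 0)"

definition dot :: "qdiv \<Rightarrow> qdiv \<Rightarrow> rat" where
  "dot d e = (\<Sum>i\<in>Rs. \<Sum>j\<in>Rs. of_int (Rint i j) * d i * e j)"

definition unitR :: "nat \<Rightarrow> qdiv" where
  "unitR i = (\<lambda>j. if j = i then 1 else 0)"

definition divR :: "(nat \<times> rat) list \<Rightarrow> qdiv" where
  "divR xs = (\<lambda>i. sum_list (map snd (filter (\<lambda>p. fst p = i) xs)))"

definition cls :: "qdiv \<Rightarrow> (nat \<Rightarrow> rat)" where
  "cls d = (\<lambda>i. if i \<in> Rs then dot (unitR i) d else 0)"

definition numeq :: "qdiv \<Rightarrow> qdiv \<Rightarrow> bool" where
  "numeq d e \<longleftrightarrow> cls d = cls e"

text \<open>The three classes the context says lie in Num(S).\<close>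
definition g1 :: qdiv where "g1 = divR [(1,1/2),(2,1/2),(3,1/2),(6,1/2)]"
definition g2 :: qdiv where "g2 = divR [(7,1/2),(8,1/2),(9,1/2),(12,1/2)]"
definition g3 :: qdiv where
  "g3 = divR [(1,1/2),(2,1/2),(5,1/2),(8,1/2),(10,1/2),(2,1/4),(3,1/4),(4,1/4),(5,1/4)]"

text \<open>N models Num(S) (as the set of Q-divisors supported on the R_i whose class
lies in Num(S)): a subgroup, closed under numerical equivalence, with integral
intersection form, containing the classes of the R_i and the three given classes.\<close>
definition num_model :: "qdiv set \<Rightarrow> bool" where
  "num_model N \<longleftrightarrow>
     (\<lambda>_. 0) \<in> N \<and>
     (\<forall>d\<in>N. \<forall>e\<in>N. (\<lambda>i. d i + e i) \<in> N) \<and>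
     (\<forall>d\<in>N. (\<lambda>i. - d i) \<in> N) \<and>
     (\<forall>d\<in>N. \<forall>e. numeq d e \<longrightarrow> e \<in> N) \<and>
     (\<forall>d\<in>N. \<forall>e\<in>N. dot d e \<in> \<int>) \<and>
     (\<forall>i\<in>Rs. unitR i \<in> N) \<and>
     g1 \<in> N \<and> g2 \<in> N \<and> g3 \<in> N"

datatype dyn = A nat | D nat | E nat

datatype fkind = Fib | HalfFib

definition valid_dyn :: "dyn \<Rightarrow> bool" where
  "valid_dyn X = (case X of A n \<Rightarrow> n \<ge> 1 | D n \<Rightarrow> n \<ge> 4 | E n \<Rightarrow> n \<in> {6,7,8})"

definition nv :: "dyn \<Rightarrow> nat" where
  "nv X = (case X of A n \<Rightarrow> n + 1 | D n \<Rightarrow> n + 1 | E n \<Rightarrow> n + 1)"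

text \<open>Undirected edges (for types other than A_1).
  A_n (n>=2): cycle 0-1-...-n-0.
  D_n: chain 0..n-4 (multiplicity 2), leaves n-3, n-2 at 0 and n-1, n at n-4.
  E_6: centre 0; arms 0-1-2, 0-3-4, 0-5-6.
  E_7: centre 0; arms 0-1-2-3, 0-4-5-6, 0-7.
  E_8: centre 0; arms 0-1-2-3-4-5, 0-6-7, 0-8.\<close>
definition dedge :: "dyn \<Rightarrow> nat \<Rightarrow> nat \<Rightarrow> bool" where
  "dedge X u v = (case X of
      A n \<Rightarrow> v = (u + 1) mod (n + 1)
    | D n \<Rightarrow> (u + 1 = v \<and> v \<le> n - 4) \<or> (u = 0 \<and> v \<in> {n-3, n-2}) \<or> (u = n - 4 \<and> v \<in> {n-1, n})
    | E n \<Rightarrow>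
        (if n = 6 then (u,v) \<in> {(0,1),(1,2),(0,3),(3,4),(0,5),(5,6)}
         else if n = 7 then (u,v) \<in> {(0,1),(1,2),(2,3),(0,4),(4,5),(5,6),(0,7)}
         else (u,v) \<in> {(0,1),(1,2),(2,3),(3,4),(4,5),(0,6),(6,7),(0,8)}))"

definition adj :: "dyn \<Rightarrow> nat \<Rightarrow> nat \<Rightarrow> nat" where
  "adj X u v = (if X = A 1 then 2 else if dedge X u v \<or> dedge X v u then 1 else 0)"

text \<open>Multiplicities of the corresponding Kodaira fiber.\<close>
definition mult :: "dyn \<Rightarrow> nat \<Rightarrow> nat" where
  "mult X u = (case X of
      A n \<Rightarrow> 1
    | D n \<Rightarrow> (if u \<le> n - 4 then 2 else 1)
    | E n \<Rightarrow>
        (if n = 6 then [3,2,1,2,1,2,1] ! u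
         else if n = 7 then [4,3,2,1,3,2,1,2] ! u
         else [6,5,4,3,2,1,4,2,3] ! u))"

definition ell_cycle_of :: "dyn \<Rightarrow> (nat \<Rightarrow> nat) \<Rightarrow> bool" where
  "ell_cycle_of X C \<longleftrightarrow> valid_dyn X \<and> (\<forall>i. i \<notin> Rs \<longrightarrow> C i = 0) \<and>
     (\<exists>\<phi>. inj_on \<phi> {..<nv X} \<and> \<phi> ` {..<nv X} = {i. C i \<noteq> 0} \<and>
        (\<forall>u<nv X. C (\<phi> u) = mult X u) \<and>
        (\<forall>u<nv X. \<forall>v<nv X. u \<noteq> v \<longrightarrow> Rint (\<phi> u) (\<phi> v) = int (adj X u v)))"

definition ell_cycle :: "(nat \<Rightarrow> nat) \<Rightarrow> bool" where
  "ell_cycle C \<longleftrightarrow> (\<exists>X. ell_cycle_of X C)"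

definition cycle_type :: "(nat \<Rightarrow> nat) \<Rightarrow> dyn" where
  "cycle_type C = (THE X. ell_cycle_of X C)"

definition qd :: "(nat \<Rightarrow> nat) \<Rightarrow> qdiv" where
  "qd C = (\<lambda>i. of_nat (C i))"

definition halfdiv :: "(nat \<Rightarrow> nat) \<Rightarrow> qdiv" where
  "halfdiv C = (\<lambda>i. of_nat (C i) / 2)"

definition is_fib :: "qdiv set \<Rightarrow> (nat \<Rightarrow> nat) \<Rightarrow> bool" where
  "is_fib N C \<longleftrightarrow> halfdiv C \<in> N"

definition cval :: "qdiv set \<Rightarrow> (nat \<Rightarrow> nat) \<Rightarrow> qdiv" where
  "cval N C = (if is_fib N C then halfdiv C else qd C)"

text \<open>HF(S,R) as a set of numerical classes.  The fibrations in E(S,R) are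
|2F| with [F] in HF(S,R); they are in bijection with these classes.\<close>
definition HFcls :: "qdiv set \<Rightarrow> (nat \<Rightarrow> rat) set" where
  "HFcls N = {cls (cval N C) | C. ell_cycle C}"

text \<open>Type of the fibration with half-fiber class phi: formal sum (multiset)
over the R-elliptic cycles C whose support is a fiber of it, i.e. c(C) = phi.\<close>
definition fib_type :: "qdiv set \<Rightarrow> (nat \<Rightarrow> rat) \<Rightarrow> (dyn \<times> fkind) multiset" where
  "fib_type N \<phi> = image_mset (\<lambda>C. (cycle_type C, if is_fib N C then Fib else HalfFib))
       (mset_set {C. ell_cycle C \<and> cls (cval N C) = \<phi>})"

definition iso_seq :: "qdiv set \<Rightarrow> qdiv list \<Rightarrow> bool" where
  "iso_seq N fs \<longleftrightarrow> (\<forall>d\<in>set fs. cls d \<in> HFcls N) \<and>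
     (\<forall>i<length fs. \<forall>j<length fs. dot (fs ! i) (fs ! j) = (if i = j then 0 else 1))"

definition cnd :: "qdiv set \<Rightarrow> nat" where
  "cnd N = (GREATEST m. \<exists>fs. length fs = m \<and> iso_seq N fs)"

end

theory Submission
  imports Defs
begin

definition Rf :: "nat \<Rightarrow> nat \<Rightarrow> int" where
"Rf i j = (if i = j then -2 else if (i=1 \<and> j=12) \<or> (i=12 \<and> j=1) \<or> (i=6\<and>j=7) \<or> (i=7\<and>j=6) then 2
  else if ((2\<le>i \<and> i\<le>5) \<and> (j=1\<or>j=6)) \<or> ((2\<le>j\<and>j\<le>5) \<and> (i=1\<or>i=6)) then 1
  else if ((8\<le>i\<and>i\<le>11) \<and> (j=7\<or>j=12)) \<or> ((8\<le>j\<and>j\<le>11)\<and>(i=7\<or>i=12)) then 1 else 0)"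
lemma Rf_Rint: "Rint = Rf"
  apply (rule ext)+ unfolding Rint_def Rf_def by (auto simp: doubleton_eq_iff)

function search :: "dyn \<Rightarrow> nat list \<Rightarrow> nat list list" where
"search X l = (if nv X \<le> length l then [l] else concat (map (\<lambda>x. if x \<notin> set l \<and> list_all (\<lambda>u. Rf (l!u) x = int (adj X u (length l))) [0..<length l] then search X (l @ [x]) else []) [1..<13]))"
  by pat_completeness auto
termination by (relation "measure (\<lambda>(X,l). nv X - length l)") auto
declare search.simps[simp del]

definition Cl :: "dyn \<Rightarrow> nat list \<Rightarrow> nat list" where
 "Cl X l = map (\<lambda>i. case filter (\<lambda>u. l!u = i) [0..<length l] of [] \<Rightarrow> 0 | u#_ \<Rightarrow> mult X u) [1..<13]"
definition Xs :: "dyn list" where "Xs = map A [1..<12] @ map D [4..<12] @ map E [6,7,8]"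
definition allC :: "(dyn \<times> nat list) list" where
 "allC = concat (map (\<lambda>X. map (\<lambda>l. (X, Cl X l)) (search X [])) Xs)"

definition T :: "(dyn \<times> nat list \<times> bool \<times> rat list) list" where "T = [(A 1, [1,0,0,0,0,0,0,0,0,0,0,1], False, [0,1,1,1,1,0,0,1,1,1,1,0]),
 (A 1, [0,0,0,0,0,1,1,0,0,0,0,0], False, [0,1,1,1,1,0,0,1,1,1,1,0]),
 (A 3, [1,1,1,0,0,1,0,0,0,0,0,0], True, [0,0,0,1,1,0,1,0,0,0,0,1]),
 (A 3, [1,1,0,1,0,1,0,0,0,0,0,0], False, [0,0,2,0,2,0,2,0,0,0,0,2]),
 (A 3, [1,1,0,0,1,1,0,0,0,0,0,0], False, [0,0,2,2,0,0,2,0,0,0,0,2]),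
 (A 3, [1,0,1,1,0,1,0,0,0,0,0,0], False, [0,2,0,0,2,0,2,0,0,0,0,2]),
 (A 3, [1,0,1,0,1,1,0,0,0,0,0,0], False, [0,2,0,2,0,0,2,0,0,0,0,2]),
 (A 3, [1,0,0,1,1,1,0,0,0,0,0,0], True, [0,1,1,0,0,0,1,0,0,0,0,1]),
 (A 3, [0,0,0,0,0,0,1,1,1,0,0,1], True, [1,0,0,0,0,1,0,0,0,1,1,0]),
 (A 3, [0,0,0,0,0,0,1,1,0,1,0,1], False, [2,0,0,0,0,2,0,0,2,0,2,0]),
 (A 3, [0,0,0,0,0,0,1,1,0,0,1,1], False, [2,0,0,0,0,2,0,0,2,2,0,0]),
 (A 3, [0,0,0,0,0,0,1,0,1,1,0,1], False, [2,0,0,0,0,2,0,2,0,0,2,0]),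
 (A 3, [0,0,0,0,0,0,1,0,1,0,1,1], False, [2,0,0,0,0,2,0,2,0,2,0,0]),
 (A 3, [0,0,0,0,0,0,1,0,0,1,1,1], True, [1,0,0,0,0,1,0,1,1,0,0,0]),
 (D 4, [2,1,1,1,1,0,0,0,0,0,0,0], True, [0,0,0,0,0,2,0,0,0,0,0,2]),
 (D 4, [0,1,1,1,1,2,0,0,0,0,0,0], True, [2,0,0,0,0,0,2,0,0,0,0,0]),
 (D 4, [0,0,0,0,0,0,2,1,1,1,1,0], True, [0,0,0,0,0,2,0,0,0,0,0,2]),
 (D 4, [0,0,0,0,0,0,0,1,1,1,1,2], True, [2,0,0,0,0,0,2,0,0,0,0,0])]"

definition FIBW :: "(nat list \<times> (int \<times> nat) list) list" where "FIBW = [([1,1,1,0,0,1,0,0,0,0,0,0], [(1,12)]),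
 ([1,0,0,1,1,1,0,0,0,0,0,0], [(2,14),(-1,1),(-1,4),(-1,7),(-1,9),(1,5),(-1,12)]),
 ([0,0,0,0,0,0,1,1,1,0,0,1], [(1,13)]),
 ([0,0,0,0,0,0,1,0,0,1,1,1], [(2,14),(-1,1),(-1,4),(-1,7),(-1,9),(1,11),(-1,13)]),
 ([2,1,1,1,1,0,0,0,0,0,0,0], [(2,14),(-1,1),(-1,4),(-1,7),(-1,9)]),
 ([0,1,1,1,1,2,0,0,0,0,0,0], [(2,14),(-1,1),(-1,4),(-1,7),(-1,9),(-1,0),(1,5)]),
 ([0,0,0,0,0,0,2,1,1,1,1,0], [(2,14),(-1,1),(-1,4),(-1,7),(-1,9)]),
 ([0,0,0,0,0,0,0,1,1,1,1,2], [(2,14),(-1,1),(-1,4),(-1,7),(-1,9),(-1,0),(1,5)])]"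

definition HFW :: "(nat list \<times> nat \<times> int) list" where "HFW = [([1,0,0,0,0,0,0,0,0,0,0,1], 1, 0),
 ([0,0,0,0,0,1,1,0,0,0,0,0], 1, 0),
 ([1,1,0,1,0,1,0,0,0,0,0,0], 12, 0),
 ([1,1,0,0,1,1,0,0,0,0,0,0], 12, 0),
 ([1,0,1,1,0,1,0,0,0,0,0,0], 12, 0),
 ([1,0,1,0,1,1,0,0,0,0,0,0], 12, 0),
 ([0,0,0,0,0,0,1,1,0,1,0,1], 13, 0),
 ([0,0,0,0,0,0,1,1,0,0,1,1], 13, 0),
 ([0,0,0,0,0,0,1,0,1,1,0,1], 13, 0),
 ([0,0,0,0,0,0,1,0,1,0,1,1], 13, 0)]"

definition GM :: "int list list" where "GM = [[0,0,1,2,2,2,2,1,1,2,2,2,2,1,2,2,2,2],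
 [0,0,1,2,2,2,2,1,1,2,2,2,2,1,2,2,2,2],
 [1,1,0,1,1,1,1,1,1,2,2,2,2,1,1,1,1,1],
 [2,2,1,0,2,2,4,1,2,4,4,4,4,2,2,2,2,2],
 [2,2,1,2,0,4,2,1,2,4,4,4,4,2,2,2,2,2],
 [2,2,1,2,4,0,2,1,2,4,4,4,4,2,2,2,2,2],
 [2,2,1,4,2,2,0,1,2,4,4,4,4,2,2,2,2,2],
 [1,1,1,1,1,1,1,0,1,2,2,2,2,1,1,1,1,1],
 [1,1,1,2,2,2,2,1,0,1,1,1,1,1,1,1,1,1],
 [2,2,2,4,4,4,4,2,1,0,2,2,4,1,2,2,2,2],
 [2,2,2,4,4,4,4,2,1,2,0,4,2,1,2,2,2,2],
 [2,2,2,4,4,4,4,2,1,2,4,0,2,1,2,2,2,2],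
 [2,2,2,4,4,4,4,2,1,4,2,2,0,1,2,2,2,2],
 [1,1,1,2,2,2,2,1,1,1,1,1,1,0,1,1,1,1],
 [2,2,1,2,2,2,2,1,1,2,2,2,2,1,0,2,0,2],
 [2,2,1,2,2,2,2,1,1,2,2,2,2,1,2,0,2,0],
 [2,2,1,2,2,2,2,1,1,2,2,2,2,1,0,2,0,2],
 [2,2,1,2,2,2,2,1,1,2,2,2,2,1,2,0,2,0]]"

definition EXP :: "(dyn \<times> nat list) list" where "EXP = map (\<lambda>(X,v,b,w). (X,v)) T"

lemma allC_eq: "set allC = set EXP" by code_simp

lemma search_complete:
  assumes inj: "inj_on phi {..<nv X}" and rng: "\<forall>u<nv X. phi u \<in> {1..<13}"
  and con: "\<forall>u<nv X. \<forall>v<nv X. u \<noteq> v \<longrightarrow> Rf (phi u) (phi v) = int (adj X u v)"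
  shows "k \<le> nv X \<Longrightarrow> map phi [0..<nv X] \<in> set (search X (map phi [0..<k]))"
proof (induction "nv X - k" arbitrary: k)
  case 0 then have "k = nv X" by simp
  then show ?case by (subst search.simps) simp
next
  case (Suc m)
  then have k: "k < nv X" by simp
  let ?l = "map phi [0..<k]"
  have notin: "phi k \<notin> set ?l"
  proof
    assume "phi k \<in> set ?l"
    then obtain i where i: "i < k" "phi i = phi k" by auto
    then have "i = k" using inj k by (auto dest: inj_onD)
    then show False using i by simp
  qed
  have c: "list_all (\<lambda>u. Rf (?l!u) (phi k) = int (adj X u (length ?l))) [0..<length ?l]"
    using con k by (auto simp: list_all_iff)
  have r: "phi k \<in> set [1..<13]" using rng k by auto
  have IH: "map phi [0..<nv X] \<in> set (search X (?l @ [phi k]))"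
    using Suc.hyps(1)[of "Suc k"] Suc.hyps(2) k by simp
  show ?case apply (subst search.simps) using k notin c r IH by auto
qed

definition sinv :: "dyn \<Rightarrow> nat list \<Rightarrow> bool" where
 "sinv X l \<longleftrightarrow> distinct l \<and> set l \<subseteq> {1..<13} \<and> length l \<le> nv X \<and>
   (\<forall>v<length l. \<forall>u<v. Rf (l!u) (l!v) = int (adj X u v))"

lemma search_sound: "l' \<in> set (search X l) \<Longrightarrow> sinv X l \<Longrightarrow> sinv X l' \<and> length l' = nv X"
proof (induction X l rule: search.induct)
  case (1 X l)
  show ?case
  proof (cases "nv X \<le> length l")
    case True
    then have "l' = l" using "1.prems"(1) by (subst (asm) search.simps) simp
    then show ?thesis using True "1.prems"(2) unfolding sinv_def by auto
  next
    case False
    from "1.prems"(1) False obtain x where x: "x \<in> set [1..<13]" "x \<notin> set l"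
      "list_all (\<lambda>u. Rf (l!u) x = int (adj X u (length l))) [0..<length l]"
      "l' \<in> set (search X (l@[x]))"
      by (subst (asm) search.simps) (auto split: if_splits)
    have "sinv X (l@[x])"
      unfolding sinv_def
    proof (intro conjI allI impI)
      show "distinct (l @ [x])" using x "1.prems"(2) by (auto simp: sinv_def)
      show "set (l @ [x]) \<subseteq> {1..<13}" using x "1.prems"(2) by (auto simp: sinv_def)
      show "length (l @ [x]) \<le> nv X" using False by simp
    next
      fix v u assume v: "v < length (l @ [x])" and u: "u < v"
      show "Rf ((l @ [x]) ! u) ((l @ [x]) ! v) = int (adj X u v)"
      proof (cases "v < length l")
        case True then show ?thesis using u "1.prems"(2) by (auto simp: sinv_def nth_append)
      next
        case False
        then have "v = length l" using v by simp
        then show ?thesis using u x(3) by (auto simp: nth_append list_all_iff)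
      qed
    qed
    then show ?thesis using "1.IH" False x by blast
  qed
qed

lemma adj_sym: "adj X u v = adj X v u" unfolding adj_def by auto

lemma Rf_sym: "Rf i j = Rf j i" unfolding Rf_def by auto

definition funL :: "nat list \<Rightarrow> nat \<Rightarrow> nat" where
  "funL v i = (if 1 \<le> i \<and> i < 13 then v ! (i - 1) else 0)"

lemma Rs_eq: "Rs = {1..<13}" unfolding Rs_def by auto

lemma map_upt_nth: "1 \<le> i \<Longrightarrow> i < 13 \<Longrightarrow> map f [1..<13] ! (i - 1) = f i"
  by (simp add: nth_map)

lemma filter_single:
  assumes "distinct l" "u < length l"
  shows "filter (\<lambda>u'. l ! u' = l ! u) [0..<length l] = [u]"
proof -
  have "[0..<length l] = [0..<u] @ [u..<u + (length l - u)]"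
    using upt_add_eq_append[of 0 u "length l - u"] assms(2) by simp
  also have "[u..<u + (length l - u)] = [u] @ [Suc u..<length l]"
    using assms(2) by (simp add: upt_conv_Cons)
  finally have "[0..<length l] = [0..<u] @ [u] @ [Suc u..<length l]" .
  moreover have "filter (\<lambda>u'. l ! u' = l ! u) [0..<u] = []"
    using assms by (auto simp: filter_empty_conv nth_eq_iff_index_eq)
  moreover have "filter (\<lambda>u'. l ! u' = l ! u) [Suc u..<length l] = []"
    using assms by (auto simp: filter_empty_conv nth_eq_iff_index_eq)
  ultimately show ?thesis by simp
qed

lemma Cl_nth: "i \<in> {1..<13} \<Longrightarrow> Cl X l ! (i - 1) = (case filter (\<lambda>u. l ! u = i) [0..<length l] of [] \<Rightarrow> 0 | u#_ \<Rightarrow> mult X u)"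
  unfolding Cl_def by (subst nth_map) auto

lemma Cl_in:
  assumes "distinct l" "u < length l" "l ! u \<in> {1..<13}"
  shows "Cl X l ! (l ! u - 1) = mult X u"
  using Cl_nth[OF assms(3), of X l] filter_single[OF assms(1,2)] by simp

lemma Cl_out:
  assumes "i \<in> {1..<13}" "i \<notin> set l"
  shows "Cl X l ! (i - 1) = 0"
proof -
  have "filter (\<lambda>u. l ! u = i) [0..<length l] = []"
    using assms by (auto simp: filter_empty_conv)
  then show ?thesis using Cl_nth[OF assms(1), of X l] by simp
qed
lemma cyc_in:
  assumes "ell_cycle_of X C"
  shows "(X, map C [1..<13]) \<in> set EXP"
proof -
  from assms obtain phi where val: "valid_dyn X" and zero: "\<forall>i. i \<notin> Rs \<longrightarrow> C i = 0"
    and inj: "inj_on phi {..<nv X}" and img: "phi ` {..<nv X} = {i. C i \<noteq> 0}"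
    and mul: "\<forall>u<nv X. C (phi u) = mult X u"
    and con: "\<forall>u<nv X. \<forall>v<nv X. u \<noteq> v \<longrightarrow> Rint (phi u) (phi v) = int (adj X u v)"
    unfolding ell_cycle_of_def by blast
  have sub: "{i. C i \<noteq> 0} \<subseteq> Rs" using zero by auto
  have "nv X = card (phi ` {..<nv X})" using card_image[OF inj] by simp
  also have "\<dots> \<le> card Rs"
  proof (rule card_mono)
    show "finite Rs" by (simp add: Rs_def)
    show "phi ` {..<nv X} \<subseteq> Rs" using img sub by simp
  qed
  finally have nv12: "nv X \<le> 12" by (simp add: Rs_def)
  have XXs: "X \<in> set Xs"
    using val nv12 by (cases X) (auto simp: Xs_def valid_dyn_def nv_def)
  have rng: "\<forall>u<nv X. phi u \<in> {1..<13}"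
  proof (intro allI impI)
    fix u assume "u < nv X"
    then have "phi u \<in> phi ` {..<nv X}" by simp
    then show "phi u \<in> {1..<13}" using img sub Rs_eq by blast
  qed
  let ?l = "map phi [0..<nv X]"
  have con': "\<forall>u<nv X. \<forall>v<nv X. u \<noteq> v \<longrightarrow> Rf (phi u) (phi v) = int (adj X u v)"
    using con by (simp add: Rf_Rint)
  have ls: "?l \<in> set (search X [])"
    using search_complete[OF inj rng con', of 0] by simp
  have dl: "distinct ?l" using inj by (simp add: distinct_map atLeast0LessThan)
  have "Cl X ?l = map C [1..<13]"
  proof (rule nth_equalityI)
    show "length (Cl X ?l) = length (map C [1..<13])" by (simp add: Cl_def)
  next
    fix j assume "j < length (Cl X ?l)"
    then have j: "j < 12" by (simp add: Cl_def)
    define i where "i = Suc j"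
    have i: "i \<in> {1..<13}" "j = i - 1" using j by (auto simp: i_def)
    show "Cl X ?l ! j = map C [1..<13] ! j"
    proof (cases "i \<in> set ?l")
      case True
      then obtain u where u: "u < nv X" "i = phi u" by auto
      then have "?l ! u = i" by simp
      then have "Cl X ?l ! j = mult X u" using Cl_in[OF dl, of u X] u i by simp
      then show ?thesis using mul u i j by simp
    next
      case False
      then have "C i = 0" using img by (auto simp: atLeast0LessThan)
      then show ?thesis using Cl_out[OF i(1) False, of X] i j by simp
    qed
  qed
  then have "(X, map C [1..<13]) \<in> set allC"
    using XXs ls unfolding allC_def by force
  then show ?thesis using allC_eq by simp
qed

lemma C_funL:
  assumes "ell_cycle_of X C" shows "C = funL (map C [1..<13])"
proof
  fix i
  have zero: "\<forall>i. i \<notin> Rs \<longrightarrow> C i = 0" using assms unfolding ell_cycle_of_def by blast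
  show "C i = funL (map C [1..<13]) i"
    using zero by (cases "i \<in> Rs") (auto simp: funL_def Rs_eq map_upt_nth)
qed

lemma cyc_from_search:
  assumes l: "l \<in> set (search X [])" and val: "valid_dyn X" and nz: "\<forall>u<nv X. mult X u \<noteq> 0"
  shows "ell_cycle_of X (funL (Cl X l))"
proof -
  have s0: "sinv X []" by (simp add: sinv_def)
  have ss: "sinv X l \<and> length l = nv X" using search_sound[OF l s0] .
  then have si: "sinv X l" and len: "length l = nv X" by blast+
  from si have dl: "distinct l" and sl: "set l \<subseteq> {1..<13}"
    and pw: "\<forall>v<length l. \<forall>u<v. Rf (l!u) (l!v) = int (adj X u v)"
    unfolding sinv_def by blast+
  let ?C = "funL (Cl X l)"
  have Cval: "?C (l!u) = mult X u" if "u < nv X" for u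
  proof -
    have "l ! u \<in> set l" using that len by simp
    with sl have "l ! u \<in> {1..<13}" by (rule subsetD)
    then show ?thesis using Cl_in[OF dl, of u X] that len by (simp add: funL_def Rs_eq)
  qed
  have supp: "{i. ?C i \<noteq> 0} = set l"
  proof (intro set_eqI iffI)
    fix i assume "i \<in> {i. ?C i \<noteq> 0}"
    then have "i \<in> Rs" "Cl X l ! (i - 1) \<noteq> 0" by (auto simp: funL_def Rs_eq split: if_splits)
    then show "i \<in> set l" using Cl_out[of i l X] by (auto simp: Rs_eq)
  next
    fix i assume "i \<in> set l"
    then obtain u where u: "u < length l" "i = l ! u" by (auto simp: in_set_conv_nth)
    then have "?C i = mult X u" using Cval len by simp
    then show "i \<in> {i. ?C i \<noteq> 0}" using nz u len by simp
  qed
  have im: "(\<lambda>u. l ! u) ` {..<nv X} = set l"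
    unfolding len[symmetric] by (auto simp: in_set_conv_nth)
  have con: "Rint (l ! u) (l ! v) = int (adj X u v)" if uv: "u < nv X" "v < nv X" "u \<noteq> v" for u v
  proof (cases "u < v")
    case True then show ?thesis using pw uv len by (simp add: Rf_Rint)
  next
    case False then have vu: "v < u" using uv by simp
    then have "Rf (l!v) (l!u) = int (adj X v u)" using pw uv len by simp
    then show ?thesis using Rf_sym[of "l!v" "l!u"] adj_sym[of X v u] by (simp add: Rf_Rint)
  qed
  show ?thesis
    unfolding ell_cycle_of_def
  proof (intro conjI exI[of _ "\<lambda>u. l ! u"])
    show "valid_dyn X" by fact
    show "\<forall>i. i \<notin> Rs \<longrightarrow> ?C i = 0" by (simp add: funL_def Rs_eq)
    show "inj_on (\<lambda>u. l ! u) {..<nv X}" using dl len by (simp add: inj_on_def nth_eq_iff_index_eq)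
    show "(\<lambda>u. l ! u) ` {..<nv X} = {i. ?C i \<noteq> 0}" using supp im by simp
    show "\<forall>u<nv X. ?C (l ! u) = mult X u" using Cval by simp
    show "\<forall>u<nv X. \<forall>v<nv X. u \<noteq> v \<longrightarrow> Rint (l ! u) (l ! v) = int (adj X u v)"
      using con by blast
  qed
qed
lemma EXP_X: "(X, v) \<in> set EXP \<Longrightarrow> X \<in> {A 1, A 3, D 4}"
  unfolding EXP_def T_def by auto

lemma EXP_len: "(X, v) \<in> set EXP \<Longrightarrow> length v = 12"
  unfolding EXP_def T_def by auto

lemma EXP_uniq: "(X, v) \<in> set EXP \<Longrightarrow> (Y, v) \<in> set EXP \<Longrightarrow> X = Y"
  unfolding EXP_def T_def by auto

lemma EXP_cyc: assumes "(X, v) \<in> set EXP" shows "ell_cycle_of X (funL v)"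
proof -
  from assms allC_eq have "(X, v) \<in> set allC" by simp
  then obtain l where l: "X \<in> set Xs" "l \<in> set (search X [])" "v = Cl X l"
    unfolding allC_def by auto
  have val: "valid_dyn X" using l(1) by (auto simp: Xs_def valid_dyn_def)
  have nz: "\<forall>u<nv X. mult X u \<noteq> 0" using EXP_X[OF assms] by (auto simp: mult_def)
  show ?thesis using cyc_from_search[OF l(2) val nz] l(3) by simp
qed

lemma map_funL: "length v = 12 \<Longrightarrow> map (funL v) [1..<13] = v"
  by (rule nth_equalityI) (auto simp: funL_def Rs_eq)

lemma ell_cycle_iff: "ell_cycle C \<longleftrightarrow> C \<in> (\<lambda>p. funL (snd p)) ` set EXP"
proof
  assume "ell_cycle C"
  then obtain X where X: "ell_cycle_of X C" unfolding ell_cycle_def by blast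
  show "C \<in> (\<lambda>p. funL (snd p)) ` set EXP"
    using cyc_in[OF X] C_funL[OF X] by force
next
  assume "C \<in> (\<lambda>p. funL (snd p)) ` set EXP"
  then show "ell_cycle C" using EXP_cyc unfolding ell_cycle_def by force
qed

lemma cycle_type_EXP: assumes "(X, v) \<in> set EXP" shows "cycle_type (funL v) = X"
  unfolding cycle_type_def
proof (rule the_equality)
  show "ell_cycle_of X (funL v)" using EXP_cyc[OF assms] .
next
  fix Y assume "ell_cycle_of Y (funL v)"
  from cyc_in[OF this] have "(Y, v) \<in> set EXP" using map_funL[OF EXP_len[OF assms]] by simp
  then show "Y = X" using EXP_uniq[OF assms] by simp
qed

section \<open>Numerical classes\<close>

definition clsL :: "qdiv \<Rightarrow> rat list" where
  "clsL d = map (\<lambda>i. sum_list (map (\<lambda>j. of_int (Rf i j) * d j) [1..<13])) [1..<13]"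

definition vecR :: "rat list \<Rightarrow> nat \<Rightarrow> rat" where
  "vecR w i = (if 1 \<le> i \<and> i < 13 then w ! (i - 1) else 0)"

lemma map_nth13: "i \<in> {1..<13} \<Longrightarrow> map g [1..<13] ! (i - 1) = g i"
  by (subst nth_map) auto

lemma sum_Rs: "(\<Sum>j\<in>Rs. f j) = sum_list (map f [1..<13])"
proof -
  have "Rs = set [1..<13]" by (simp add: Rs_eq)
  then show ?thesis by (simp add: sum_list_distinct_conv_sum_set)
qed

lemma Rint_sym: "Rint i j = Rint j i" using Rf_sym by (simp add: Rf_Rint)

lemma dot_unit: assumes "i \<in> Rs" shows "dot (unitR i) d = (\<Sum>j\<in>Rs. of_int (Rint i j) * d j)"
proof -
  have "dot (unitR i) d = (\<Sum>i'\<in>Rs. if i' = i then (\<Sum>j\<in>Rs. of_int (Rint i' j) * d j) else 0)"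
    unfolding dot_def unitR_def by (rule sum.cong) auto
  also have "\<dots> = (\<Sum>j\<in>Rs. of_int (Rint i j) * d j)"
    using assms by (simp add: sum.delta Rs_def)
  finally show ?thesis .
qed

lemma cls_vecR: "cls d = vecR (clsL d)"
proof
  fix i
  show "cls d i = vecR (clsL d) i"
  proof (cases "i \<in> Rs")
    case True
    then have i: "i \<in> {1..<13}" by (simp add: Rs_eq)
    have "cls d i = (\<Sum>j\<in>Rs. of_int (Rint i j) * d j)" using True by (simp add: cls_def dot_unit)
    also have "\<dots> = clsL d ! (i - 1)"
      unfolding clsL_def map_nth13[OF i] sum_Rs Rf_Rint ..
    finally show ?thesis using i by (simp add: vecR_def)
  next
    case False
    then have "\<not> (1 \<le> i \<and> i < 13)" using Rs_eq by auto
    then show ?thesis using False by (auto simp: cls_def vecR_def)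
  qed
qed

lemma len_clsL[simp]: "length (clsL d) = 12" by (simp add: clsL_def)

lemma vecR_inj: assumes "length w = 12" "length w' = 12" "vecR w = vecR w'" shows "w = w'"
proof (rule nth_equalityI)
  show "length w = length w'" using assms by simp
next
  fix j assume j: "j < length w"
  have "w ! j = vecR w (Suc j)" using j assms(1) by (simp add: vecR_def)
  also have "\<dots> = vecR w' (Suc j)" using assms(3) by simp
  also have "\<dots> = w' ! j" using j assms(1,2) by (simp add: vecR_def)
  finally show "w ! j = w' ! j" .
qed

lemma numeq_iff: "numeq d e \<longleftrightarrow> clsL d = clsL e"
  unfolding numeq_def cls_vecR using vecR_inj[of "clsL d" "clsL e"] by auto

lemma dot_sym: "dot d e = dot e d"
  unfolding dot_def
  by (subst sum.swap) (auto intro!: sum.cong simp: Rint_sym[of _ ] mult_ac)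

lemma dot_cls: "dot d e = (\<Sum>i\<in>Rs. d i * cls e i)"
proof -
  have "dot d e = (\<Sum>i\<in>Rs. d i * (\<Sum>j\<in>Rs. of_int (Rint i j) * e j))"
    unfolding dot_def by (auto intro!: sum.cong simp: sum_distrib_left mult_ac)
  also have "\<dots> = (\<Sum>i\<in>Rs. d i * cls e i)"
    by (rule sum.cong) (auto simp: cls_def dot_unit)
  finally show ?thesis .
qed

lemma dot_L: "dot d e = sum_list (map (\<lambda>i. d i * clsL e ! (i - 1)) [1..<13])"
proof -
  have "dot d e = (\<Sum>i\<in>Rs. d i * clsL e ! (i - 1))"
    unfolding dot_cls cls_vecR by (rule sum.cong) (auto simp: vecR_def Rs_eq)
  then show ?thesis by (simp add: sum_Rs)
qed

lemma dot_cong: assumes "cls d = cls d'" "cls e = cls e'" shows "dot d e = dot d' e'"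
proof -
  have "dot d e = dot d e'" unfolding dot_cls using assms(2) by simp
  also have "\<dots> = dot e' d" by (rule dot_sym)
  also have "\<dots> = dot e' d'" unfolding dot_cls using assms(1) by simp
  also have "\<dots> = dot d' e'" by (rule dot_sym)
  finally show ?thesis .
qed

section \<open>The lattice N\<close>

definition GEN :: "qdiv list" where "GEN = map unitR [1..<13] @ [g1, g2, g3]"

definition lin :: "(int \<times> nat) list \<Rightarrow> qdiv" where
  "lin ps = (\<lambda>i. sum_list (map (\<lambda>p. of_int (fst p) * (GEN ! snd p) i) ps))"

context
  fixes N assumes nm: "num_model N"
begin

lemma nm_add: "d \<in> N \<Longrightarrow> e \<in> N \<Longrightarrow> (\<lambda>i. d i + e i) \<in> N" using nm unfolding num_model_def by blast
lemma nm_neg: "d \<in> N \<Longrightarrow> (\<lambda>i. - d i) \<in> N" using nm unfolding num_model_def by blast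
lemma nm_zero: "(\<lambda>_. 0) \<in> N" using nm unfolding num_model_def by blast
lemma nm_numeq: "d \<in> N \<Longrightarrow> numeq d e \<Longrightarrow> e \<in> N" using nm unfolding num_model_def by blast
lemma nm_int: "d \<in> N \<Longrightarrow> e \<in> N \<Longrightarrow> dot d e \<in> \<int>" using nm unfolding num_model_def by blast

lemma gen_in: "j < 15 \<Longrightarrow> GEN ! j \<in> N"
proof -
  assume j: "j < 15"
  have s: "set GEN \<subseteq> N" using nm unfolding num_model_def GEN_def by (auto simp: Rs_eq)
  have "length GEN = 15" by (simp add: GEN_def)
  then have "GEN ! j \<in> set GEN" using j by simp
  then show ?thesis using s by blast
qed

lemma zmult_nat: "g \<in> N \<Longrightarrow> (\<lambda>i. of_nat n * g i) \<in> N"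
proof (induction n)
  case 0 then show ?case using nm_zero by simp
next
  case (Suc n)
  then have "(\<lambda>i. of_nat n * g i + g i) \<in> N" using nm_add by blast
  then show ?case by (simp add: algebra_simps)
qed

lemma zmult: assumes "g \<in> N" shows "(\<lambda>i. of_int k * g i) \<in> N"
proof (cases "k \<ge> 0")
  case True
  then have "(\<lambda>i. of_nat (nat k) * g i) \<in> N" using zmult_nat assms by blast
  then show ?thesis using True by simp
next
  case False
  then have "(\<lambda>i. - (of_nat (nat (- k)) * g i)) \<in> N" using zmult_nat assms nm_neg by blast
  then show ?thesis using False by simp
qed

lemma lin_in: "\<forall>p\<in>set ps. snd p < 15 \<Longrightarrow> lin ps \<in> N"
proof (induction ps)
  case Nil then show ?case using nm_zero by (simp add: lin_def)
next
  case (Cons p ps)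
  have "(\<lambda>i. of_int (fst p) * (GEN ! snd p) i) \<in> N" using zmult gen_in Cons.prems by simp
  moreover have "lin ps \<in> N" using Cons by simp
  ultimately have "(\<lambda>i. of_int (fst p) * (GEN ! snd p) i + lin ps i) \<in> N" using nm_add by blast
  then show ?case by (simp add: lin_def)
qed

end



lemma FIBW_check: "list_all (\<lambda>(v,ps). clsL (lin ps) = clsL (halfdiv (funL v)) \<and> list_all (\<lambda>p. snd p < 15) ps) FIBW"
  by code_simp

lemma HFW_check: "list_all (\<lambda>(v,j,k). j < 15 \<and> sum_list (map (\<lambda>i. halfdiv (funL v) i * clsL (GEN ! j) ! (i - 1)) [1..<13]) = of_int k + 1/2) HFW"
  by code_simp

lemma T_check1: "list_all (\<lambda>(X,v,b,w). (b \<longrightarrow> v \<in> set (map fst FIBW)) \<and> (\<not> b \<longrightarrow> v \<in> set (map fst HFW))) T"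
  by code_simp

lemma T_check2: "list_all (\<lambda>(X,v,b,w). clsL (if b then halfdiv (funL v) else qd (funL v)) = w) T"
  by code_simp

lemma half_not_int: "(1/2::rat) \<notin> \<int>"
proof
  assume "(1/2::rat) \<in> \<int>"
  then obtain k where k: "(1/2::rat) = of_int k" by (auto elim: Ints_cases)
  then have "(of_int (2 * k) :: rat) = 1" by simp
  then have "2 * k = 1" by (simp only: of_int_eq_1_iff)
  then show False by presburger
qed

context
  fixes N assumes nm: "num_model N"
begin

lemma fib_in: assumes "(v, ps) \<in> set FIBW" shows "halfdiv (funL v) \<in> N"
proof -
  from FIBW_check assms have c: "clsL (lin ps) = clsL (halfdiv (funL v))" "list_all (\<lambda>p. snd p < 15) ps"
    by (auto simp: list_all_iff)
  have "lin ps \<in> N" using lin_in[OF nm] c(2) by (simp add: list_all_iff)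
  then show ?thesis using nm_numeq[OF nm] c(1) numeq_iff by blast
qed

lemma hf_out: assumes "(v, j, k) \<in> set HFW" shows "halfdiv (funL v) \<notin> N"
proof
  assume h: "halfdiv (funL v) \<in> N"
  from HFW_check assms have c: "j < 15"
    "sum_list (map (\<lambda>i. halfdiv (funL v) i * clsL (GEN ! j) ! (i - 1)) [1..<13]) = of_int k + 1/2"
    by (auto simp: list_all_iff)
  have "dot (halfdiv (funL v)) (GEN ! j) \<in> \<int>" using nm_int[OF nm h gen_in[OF nm c(1)]] .
  then have "of_int k + (1/2::rat) \<in> \<int>" using c(2) by (simp add: dot_L)
  then have "of_int k + (1/2::rat) - of_int k \<in> \<int>" by (intro Ints_diff) auto
  then show False using half_not_int by simp
qed

lemma isfib_T: assumes "(X, v, b, w) \<in> set T" shows "is_fib N (funL v) = b"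
proof -
  from T_check1 assms have c: "b \<longrightarrow> v \<in> set (map fst FIBW)" "\<not> b \<longrightarrow> v \<in> set (map fst HFW)"
    by (auto simp: list_all_iff)
  show ?thesis
  proof (cases b)
    case True
    then obtain ps where "(v, ps) \<in> set FIBW" using c(1) by auto
    then show ?thesis using fib_in True by (simp add: is_fib_def)
  next
    case False
    then obtain jk where "(v, jk) \<in> set HFW" using c(2) by auto
    then show ?thesis using hf_out False by (cases jk) (simp add: is_fib_def)
  qed
qed

lemma cls_T: assumes "(X, v, b, w) \<in> set T" shows "cls (cval N (funL v)) = vecR w"
proof -
  from T_check2 assms have "clsL (if b then halfdiv (funL v) else qd (funL v)) = w"
    by (auto simp: list_all_iff)
  then show ?thesis using isfib_T[OF assms] by (simp add: cval_def cls_vecR)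
qed

end

definition vT :: "dyn \<times> nat list \<times> bool \<times> rat list \<Rightarrow> nat list" where "vT t = fst (snd t)"
definition wT :: "dyn \<times> nat list \<times> bool \<times> rat list \<Rightarrow> rat list" where "wT t = snd (snd (snd t))"
definition fkT :: "dyn \<times> nat list \<times> bool \<times> rat list \<Rightarrow> dyn \<times> fkind" where
  "fkT t = (fst t, if fst (snd (snd t)) then Fib else HalfFib)"
definition rep :: "dyn \<times> nat list \<times> bool \<times> rat list \<Rightarrow> qdiv" where
  "rep t = (if fst (snd (snd t)) then halfdiv (funL (vT t)) else qd (funL (vT t)))"

lemma T_check3: "list_all (\<lambda>t. length (wT t) = 12 \<and> length (vT t) = 12) T \<and> distinct (map vT T)"
  by code_simp

lemma wT_len: "t \<in> set T \<Longrightarrow> length (wT t) = 12" using T_check3 by (auto simp: list_all_iff)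
lemma vT_len: "t \<in> set T \<Longrightarrow> length (vT t) = 12" using T_check3 by (auto simp: list_all_iff)

lemma cls_rep: assumes "t \<in> set T" shows "cls (rep t) = vecR (wT t)"
proof -
  obtain X v b w where t: "t = (X, v, b, w)" by (cases t) auto
  have "clsL (if b then halfdiv (funL v) else qd (funL v)) = w"
    using T_check2 assms t by (auto simp: list_all_iff)
  then show ?thesis by (cases b) (simp_all add: t rep_def vT_def wT_def cls_vecR)
qed

lemma EXP_alt: "EXP = map (\<lambda>t. (fst t, vT t)) T"
proof -
  have "(\<lambda>(X::dyn, v::nat list, b::bool, w::rat list). (X, v)) = (\<lambda>t. (fst t, vT t))"
    by (rule ext) (simp add: vT_def split: prod.splits)
  then show ?thesis by (simp add: EXP_def)
qed

lemma ell_cycle_T: "ell_cycle C \<longleftrightarrow> C \<in> (\<lambda>t. funL (vT t)) ` set T"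
proof -
  have "(\<lambda>p. funL (snd p)) ` set EXP = (\<lambda>t. funL (vT t)) ` set T"
    unfolding EXP_alt by (simp add: image_image)
  then show ?thesis using ell_cycle_iff by simp
qed

lemma inj_funL: "inj_on (\<lambda>t. funL (vT t)) (set T)"
proof (rule inj_onI)
  fix s t assume st: "s \<in> set T" "t \<in> set T" "funL (vT s) = funL (vT t)"
  then have "vT s = vT t" using map_funL[OF vT_len[OF st(1)]] map_funL[OF vT_len[OF st(2)]] by metis
  moreover have "inj_on vT (set T)" using T_check3 by (simp add: distinct_map)
  ultimately show "s = t" using st by (simp add: inj_on_def)
qed

lemma distinct_T: "distinct T" using T_check3 by (simp add: distinct_map)

lemma T_EXP: "t \<in> set T \<Longrightarrow> (fst t, vT t) \<in> set EXP"
  unfolding EXP_alt by simp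

context
  fixes N assumes nm: "num_model N"
begin

lemma isfib_T': "t \<in> set T \<Longrightarrow> is_fib N (funL (vT t)) = fst (snd (snd t))"
  using isfib_T[OF nm] unfolding vT_def by (cases t) auto

lemma cls_T': "t \<in> set T \<Longrightarrow> cls (cval N (funL (vT t))) = vecR (wT t)"
  using cls_T[OF nm] unfolding vT_def wT_def by (cases t) auto

lemma HFcls_eq: "HFcls N = vecR ` set (map wT T)"
  unfolding HFcls_def
proof (intro set_eqI iffI)
  fix x assume "x \<in> {cls (cval N C) |C. ell_cycle C}"
  then obtain C where x: "x = cls (cval N C)" "ell_cycle C" by blast
  then obtain t where t: "t \<in> set T" "C = funL (vT t)" using ell_cycle_T by auto
  then show "x \<in> vecR ` set (map wT T)" using cls_T' x by auto
next
  fix x assume "x \<in> vecR ` set (map wT T)"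
  then obtain t where t: "t \<in> set T" "x = vecR (wT t)" by auto
  then have "ell_cycle (funL (vT t))" using ell_cycle_T by auto
  then show "x \<in> {cls (cval N C) |C. ell_cycle C}"
    using cls_T'[OF t(1)] t(2) by (intro CollectI exI[of _ "funL (vT t)"]) simp
qed

lemma fib_type_eq: assumes "length w0 = 12"
  shows "fib_type N (vecR w0) = mset (map fkT (filter (\<lambda>t. wT t = w0) T))"
proof -
  let ?F = "filter (\<lambda>t. wT t = w0) T"
  have set_eq: "{C. ell_cycle C \<and> cls (cval N C) = vecR w0} = (\<lambda>t. funL (vT t)) ` set ?F"
  proof (intro set_eqI iffI)
    fix C assume "C \<in> {C. ell_cycle C \<and> cls (cval N C) = vecR w0}"
    then obtain t where t: "t \<in> set T" "C = funL (vT t)" "cls (cval N C) = vecR w0"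
      using ell_cycle_T by auto
    then have "vecR (wT t) = vecR w0" using cls_T' by simp
    then have "wT t = w0" using vecR_inj[OF wT_len[OF t(1)] assms] by simp
    then show "C \<in> (\<lambda>t. funL (vT t)) ` set ?F" using t by auto
  next
    fix C assume "C \<in> (\<lambda>t. funL (vT t)) ` set ?F"
    then obtain t where t: "t \<in> set T" "wT t = w0" "C = funL (vT t)" by auto
    then show "C \<in> {C. ell_cycle C \<and> cls (cval N C) = vecR w0}"
      using ell_cycle_T cls_T' by auto
  qed
  have d: "distinct (map (\<lambda>t. funL (vT t)) ?F)"
    using distinct_T inj_funL by (auto simp: distinct_map intro: inj_on_subset)
  have "mset_set ((\<lambda>t. funL (vT t)) ` set ?F) = mset (map (\<lambda>t. funL (vT t)) ?F)"
    using mset_set_set[OF d] by simp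
  then have "fib_type N (vecR w0) =
     image_mset (\<lambda>C. (cycle_type C, if is_fib N C then Fib else HalfFib)) (mset (map (\<lambda>t. funL (vT t)) ?F))"
    unfolding fib_type_def set_eq by simp
  also have "\<dots> = mset (map (\<lambda>t. (cycle_type (funL (vT t)), if is_fib N (funL (vT t)) then Fib else HalfFib)) ?F)"
    by (simp only: mset_map multiset.map_comp comp_def)
  also have "\<dots> = mset (map fkT ?F)"
  proof -
    have "map (\<lambda>t. (cycle_type (funL (vT t)), if is_fib N (funL (vT t)) then Fib else HalfFib)) ?F = map fkT ?F"
    proof (rule map_cong)
      fix t assume "t \<in> set ?F"
      then have t: "t \<in> set T" by simp
      show "(cycle_type (funL (vT t)), if is_fib N (funL (vT t)) then Fib else HalfFib) = fkT t"
        using cycle_type_EXP[OF T_EXP[OF t]] isfib_T'[OF t] by (simp add: fkT_def)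
    qed simp
    then show ?thesis by (rule arg_cong[where f=mset])
  qed
  finally show ?thesis .
qed

lemma main_mset: "image_mset (fib_type N) (mset_set (HFcls N)) =
   mset (map (\<lambda>w0. mset (map fkT (filter (\<lambda>t. wT t = w0) T))) (remdups (map wT T)))"
proof -
  let ?W = "remdups (map wT T)"
  have lenW: "\<And>w. w \<in> set ?W \<Longrightarrow> length w = 12" using wT_len by auto
  have inj: "inj_on vecR (set ?W)" using vecR_inj lenW by (auto simp: inj_on_def)
  have "HFcls N = set (map vecR ?W)" using HFcls_eq by simp
  moreover have "distinct (map vecR ?W)" using inj by (simp add: distinct_map)
  ultimately have "mset_set (HFcls N) = mset (map vecR ?W)" using mset_set_set by metis
  then have "image_mset (fib_type N) (mset_set (HFcls N)) = mset (map (\<lambda>w0. fib_type N (vecR w0)) ?W)"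
    by (simp only: mset_map multiset.map_comp comp_def)
  also have "map (\<lambda>w0. fib_type N (vecR w0)) ?W = map (\<lambda>w0. mset (map fkT (filter (\<lambda>t. wT t = w0) T))) ?W"
    using fib_type_eq lenW by (auto intro!: map_cong)
  finally show ?thesis .
qed

end

lemma final_mset: "mset (map (\<lambda>w0. mset (map fkT (filter (\<lambda>t. wT t = w0) T))) (remdups (map wT T))) =
           replicate_mset 1 {#(A 1, HalfFib), (A 1, HalfFib)#}
         + replicate_mset 4 {#(A 3, Fib)#}
         + replicate_mset 8 {#(A 3, HalfFib)#}
         + replicate_mset 2 {#(D 4, Fib), (D 4, Fib)#}"
  by code_simp


section \<open>Isotropic sequences\<close>

fun ext :: "nat \<Rightarrow> nat list \<Rightarrow> bool" where
  "ext 0 cs = True"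
| "ext (Suc k) cs = list_ex (\<lambda>i. ext k (filter (\<lambda>j. GM ! i ! j = 1) cs)) cs"

lemma GM_check: "list_all (\<lambda>i. list_all (\<lambda>j. sum_list (map (\<lambda>k. rep (T!i) k * wT (T!j) ! (k - 1)) [1..<13]) = of_int (GM ! i ! j)) [0..<18]) [0..<18]"
  by code_simp

lemma no_ext6: "\<not> ext 6 [0..<18]"
  by code_simp

lemma len_T: "length T = 18" by (simp add: T_def)

lemma clsL_rep: assumes "t \<in> set T" shows "clsL (rep t) = wT t"
  using vecR_inj[OF len_clsL wT_len[OF assms]] cls_rep[OF assms] by (simp add: cls_vecR)

lemma dot_rep: assumes "i < 18" "j < 18" shows "dot (rep (T!i)) (rep (T!j)) = of_int (GM ! i ! j)"
proof -
  have tj: "T ! j \<in> set T" using assms len_T by simp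
  have "dot (rep (T!i)) (rep (T!j)) = sum_list (map (\<lambda>k. rep (T!i) k * wT (T!j) ! (k - 1)) [1..<13])"
    by (simp add: dot_L clsL_rep[OF tj])
  also have "\<dots> = of_int (GM ! i ! j)" using GM_check assms by (simp add: list_all_iff)
  finally show ?thesis .
qed

definition pwi :: "nat list \<Rightarrow> bool" where
  "pwi ts \<longleftrightarrow> (\<forall>a<length ts. \<forall>b<length ts. a \<noteq> b \<longrightarrow> GM ! (ts!a) ! (ts!b) = 1)"

lemma ext_complete: "set ts \<subseteq> set cs \<Longrightarrow> pwi ts \<Longrightarrow> ext (length ts) cs"
proof (induction ts arbitrary: cs)
  case Nil show ?case by simp
next
  case (Cons t ts)
  have t: "t \<in> set cs" using Cons.prems(1) by simp
  have sub: "set ts \<subseteq> set (filter (\<lambda>j. GM ! t ! j = 1) cs)"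
  proof
    fix s assume s: "s \<in> set ts"
    then obtain b where b: "b < length ts" "s = ts ! b" by (auto simp: in_set_conv_nth)
    have "GM ! ((t#ts)!0) ! ((t#ts)!(Suc b)) = 1"
      by (rule Cons.prems(2)[unfolded pwi_def, rule_format]) (use b in auto)
    then show "s \<in> set (filter (\<lambda>j. GM ! t ! j = 1) cs)" using s Cons.prems(1) b by auto
  qed
  have "pwi ts"
    unfolding pwi_def
  proof (intro allI impI)
    fix a b assume ab: "a < length ts" "b < length ts" "a \<noteq> b"
    have "GM ! ((t#ts)!Suc a) ! ((t#ts)!(Suc b)) = 1"
      by (rule Cons.prems(2)[unfolded pwi_def, rule_format]) (use ab in auto)
    then show "GM ! (ts ! a) ! (ts ! b) = 1" by simp
  qed
  then have "ext (length ts) (filter (\<lambda>j. GM ! t ! j = 1) cs)" using Cons.IH sub by blast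
  then show ?case using t by (auto simp: list_ex_iff)
qed

lemma no6:
  assumes nm: "num_model N" and iso: "iso_seq N fs" and len: "6 \<le> length fs"
  shows False
proof -
  have hf: "\<forall>d\<in>set fs. cls d \<in> HFcls N" using iso unfolding iso_seq_def by blast
  have dt: "\<forall>i<length fs. \<forall>j<length fs. dot (fs!i) (fs!j) = (if i = j then 0 else 1)"
    using iso unfolding iso_seq_def by blast
  have ex: "\<forall>a. \<exists>i. a < 6 \<longrightarrow> i < 18 \<and> cls (fs!a) = cls (rep (T!i))"
  proof
    fix a
    show "\<exists>i. a < 6 \<longrightarrow> i < 18 \<and> cls (fs!a) = cls (rep (T!i))"
    proof (cases "a < 6")
      case True
      then have "fs ! a \<in> set fs" using len by simp
      then have "cls (fs ! a) \<in> vecR ` set (map wT T)" using hf HFcls_eq[OF nm] by auto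
      then obtain t where t: "t \<in> set T" "cls (fs ! a) = vecR (wT t)" by auto
      then obtain i where i: "i < 18" "t = T ! i" using len_T by (auto simp: in_set_conv_nth)
      then show ?thesis using t cls_rep[OF t(1)] True by (intro exI[of _ i]) simp
    qed simp
  qed
  then obtain idx where idx: "\<forall>a. a < 6 \<longrightarrow> idx a < 18 \<and> cls (fs!a) = cls (rep (T!(idx a)))"
    by (metis choice)
  let ?ts = "map idx [0..<6]"
  have sub: "set ?ts \<subseteq> set [0..<18]" using idx by auto
  have "pwi ?ts"
    unfolding pwi_def
  proof (intro allI impI)
    fix a b assume ab: "a < length ?ts" "b < length ?ts" "a \<noteq> b"
    then have a6: "a < 6" and b6: "b < 6" by auto
    have "of_int (GM ! idx a ! idx b) = dot (rep (T!(idx a))) (rep (T!(idx b)))"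
      using dot_rep idx a6 b6 by simp
    also have "\<dots> = dot (fs!a) (fs!b)"
      using idx a6 b6 by (intro dot_cong) auto
    also have "\<dots> = 1" using dt a6 b6 len ab(3) by simp
    finally have "GM ! idx a ! idx b = 1" by simp
    then show "GM ! (?ts ! a) ! (?ts ! b) = 1" using a6 b6 by simp
  qed
  from ext_complete[OF sub this] have "ext 6 [0..<18]" by simp
  then show False using no_ext6 by simp
qed

definition L5 :: "qdiv list" where
  "L5 = [divR [(1,1/2),(2,1/2),(3,1/2),(6,1/2)],
           divR [(1,1/2),(4,1/2),(5,1/2),(6,1/2)],
           divR [(7,1/2),(8,1/2),(9,1/2),(12,1/2)],
           divR [(7,1/2),(10,1/2),(11,1/2),(12,1/2)],
           divR [(1,1),(12,1)]]"

lemma L5_check1: "list_all (\<lambda>d. clsL d \<in> set (map wT T)) L5"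
  by code_simp

lemma L5_check2: "list_all (\<lambda>i. list_all (\<lambda>j. sum_list (map (\<lambda>k. (L5!i) k * clsL (L5!j) ! (k - 1)) [1..<13]) = (if i = j then 0 else 1)) [0..<5]) [0..<5]"
  by code_simp

lemma len_L5: "length L5 = 5" by (simp add: L5_def)

lemma L5_iso: assumes nm: "num_model N" shows "iso_seq N L5"
  unfolding iso_seq_def
proof (intro conjI ballI allI impI)
  fix d assume "d \<in> set L5"
  then have "clsL d \<in> set (map wT T)" using L5_check1 by (auto simp: list_all_iff)
  then show "cls d \<in> HFcls N" unfolding HFcls_eq[OF nm] cls_vecR by blast
next
  fix i j assume "i < length L5" "j < length L5"
  then have "i \<in> set [0..<5]" "j \<in> set [0..<5]" using len_L5 by auto
  then show "dot (L5 ! i) (L5 ! j) = (if i = j then 0 else 1)"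
    using L5_check2 unfolding list_all_iff dot_L by blast
qed

lemma cnd_eq: assumes nm: "num_model N" shows "cnd N = 5"
  unfolding cnd_def
proof (rule Greatest_equality)
  show "\<exists>fs. length fs = 5 \<and> iso_seq N fs" using L5_iso[OF nm] len_L5 by blast
next
  fix y assume "\<exists>fs. length fs = y \<and> iso_seq N fs"
  then obtain fs where fs: "length fs = y" "iso_seq N fs" by blast
  show "y \<le> 5"
  proof (rule ccontr)
    assume "\<not> y \<le> 5"
    then have "6 \<le> length fs" using fs(1) by simp
    then show False using no6[OF nm fs(2)] by simp
  qed
qed

theorem proposition6p4:
  fixes N :: "qdiv set"
  assumes "num_model N"
  shows "image_mset (fib_type N) (mset_set (HFcls N)) =
           replicate_mset 1 {#(A 1, HalfFib), (A 1, HalfFib)#}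
         + replicate_mset 4 {#(A 3, Fib)#}
         + replicate_mset 8 {#(A 3, HalfFib)#}
         + replicate_mset 2 {#(D 4, Fib), (D 4, Fib)#}
       \<and> cnd N = 5
       \<and> iso_seq N
          [divR [(1,1/2),(2,1/2),(3,1/2),(6,1/2)],
           divR [(1,1/2),(4,1/2),(5,1/2),(6,1/2)],
           divR [(7,1/2),(8,1/2),(9,1/2),(12,1/2)],
           divR [(7,1/2),(10,1/2),(11,1/2),(12,1/2)],
           divR [(1,1),(12,1)]]"
proof -
  have m: "image_mset (fib_type N) (mset_set (HFcls N)) =
           replicate_mset 1 {#(A 1, HalfFib), (A 1, HalfFib)#}
         + replicate_mset 4 {#(A 3, Fib)#}
         + replicate_mset 8 {#(A 3, HalfFib)#}
         + replicate_mset 2 {#(D 4, Fib), (D 4, Fib)#}"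
    using trans[OF main_mset[OF assms] final_mset] .
  show ?thesis using m cnd_eq[OF assms] L5_iso[OF assms] unfolding L5_def by blast
qed

end
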